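(* Consider two loci with $K$ alleles at locus A and $L$ at locus B, haplotype frequency path $\{X(t)=(X_{ij}(t)):t\in[0,T]\}$ in the simplex $\Delta_{KL-1}$ with marginals $X_{i\cdot}=\sum_l X_{il}$, $X_{\cdot j}=\sum_k X_{kj}$, and let $I_T=\int_0^T\sum_{i,j}\frac{(X_{ij}(t)-X_{i\cdot}(t)X_{\cdot j}(t))^2}{X_{ij}(t)}dt$ be finite and positive. For a known drift component $c$, define the recombination estimator $\hat\rho[c]=I_T^{-1}\int_0^T\sum_{i=1}^K\sum_{j=1}^L\frac{X_{i\cdot}(t)X_{\cdot j}(t)}{X_{ij}(t)}\,d\widetilde X^{c}_{ij}(t)$ with $\widetilde X^c_{ij}(t)=X_{ij}(t)-\int_0^tc_{ij}(X(s))ds$. Let $c^{\mathrm{mut}}_{ij}(x)=\frac{\theta_A}{2}\sum_{k}x_{kj}(P^A_{ki}-\delta_{ik})+\frac{\theta_B}{2}\sum_l x_{il}(P^B_{lj}-\delta_{jl})$ and $$c^{\mathrm{sel}}_{ij}(x)=c^{\mathrm{mut}}_{ij}(x)+\frac{x_{ij}}{2}\sum_{k=1}^K\sum_{l=1}^L\Big(s_{ij,kl}x_{kl}-\sum_{m=1}^K\sum_{n=1}^L s_{kl,mn}x_{kl}x_{mn}\Big).$$ If selection is non-epistatic, i.e. $s_{ij,kl}=s^A_{ik}+s^B_{jl}$ for some constants $s^A_{ik},s^B_{jl}$, then $\hat\rho[c^{\mathrm{sel}}]=\hat\rho[c^{\mathrm{mut}}]$.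
   Context: This is the model of a two-locus Wright--Fisher diffusion with recombination drift $\rho(x_{i\cdot}x_{\cdot j}-x_{ij})$, mutation at rates $\theta_A/2,\theta_B/2$ with stochastic transition matrices $P^A,P^B$, and diploid epistatic selection in which an individual carrying haplotypes $(i,j)$ and $(k,l)$ has selective parameter $s_{ij,kl}$; $\hat\rho[c]$ is the maximum-likelihood recombination estimator computed when the known part of the drift is taken to be $c$. *)

theory Defs
  imports "HOL-Analysis.Analysis"
begin

text \<open>Haplotype frequencies: x i j for i < K (locus A), j < L (locus B).\<close>

definition margA :: "nat \<Rightarrow> (nat \<Rightarrow> nat \<Rightarrow> real) \<Rightarrow> nat \<Rightarrow> real" where
  "margA L x i = (\<Sum>l<L. x i l)"

definition margB :: "nat \<Rightarrow> (nat \<Rightarrow> nat \<Rightarrow> real) \<Rightarrow> nat \<Rightarrow> real" where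
  "margB K x j = (\<Sum>k<K. x k j)"

definition in_simplex :: "nat \<Rightarrow> nat \<Rightarrow> (nat \<Rightarrow> nat \<Rightarrow> real) \<Rightarrow> bool" where
  "in_simplex K L x \<longleftrightarrow> (\<forall>i<K. \<forall>j<L. 0 \<le> x i j) \<and> (\<Sum>i<K. \<Sum>j<L. x i j) = 1"

definition stochastic_matrix :: "nat \<Rightarrow> (nat \<Rightarrow> nat \<Rightarrow> real) \<Rightarrow> bool" where
  "stochastic_matrix n P \<longleftrightarrow> (\<forall>i<n. \<forall>j<n. 0 \<le> P i j) \<and> (\<forall>i<n. (\<Sum>j<n. P i j) = 1)"

definition I_T :: "nat \<Rightarrow> nat \<Rightarrow> real \<Rightarrow> (real \<Rightarrow> nat \<Rightarrow> nat \<Rightarrow> real) \<Rightarrow> real" where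
  "I_T K L T X = integral {0..T} (\<lambda>t. \<Sum>i<K. \<Sum>j<L.
      (X t i j - margA L (X t) i * margB K (X t) j)\<^sup>2 / X t i j)"

text \<open>The stochastic integral
  J = \<integral>_0^T \<Sum>_ij X_i.X_.j/X_ij dX_ij is taken as a given real number; the integral
  against X~^c = X - \<integral> c(X) ds then splits as J minus the Lebesgue-Stieltjes (dt) part.\<close>
definition rho_hat :: "nat \<Rightarrow> nat \<Rightarrow> real \<Rightarrow> (real \<Rightarrow> nat \<Rightarrow> nat \<Rightarrow> real) \<Rightarrow> real
    \<Rightarrow> ((nat \<Rightarrow> nat \<Rightarrow> real) \<Rightarrow> nat \<Rightarrow> nat \<Rightarrow> real) \<Rightarrow> real" where
  "rho_hat K L T X J c = (J - integral {0..T} (\<lambda>t. \<Sum>i<K. \<Sum>j<L.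
      margA L (X t) i * margB K (X t) j / X t i j * c (X t) i j)) / I_T K L T X"

definition c_mut :: "nat \<Rightarrow> nat \<Rightarrow> real \<Rightarrow> real \<Rightarrow> (nat \<Rightarrow> nat \<Rightarrow> real) \<Rightarrow> (nat \<Rightarrow> nat \<Rightarrow> real)
    \<Rightarrow> (nat \<Rightarrow> nat \<Rightarrow> real) \<Rightarrow> nat \<Rightarrow> nat \<Rightarrow> real" where
  "c_mut K L thA thB PA PB x i j =
     thA / 2 * (\<Sum>k<K. x k j * (PA k i - (if i = k then 1 else 0)))
   + thB / 2 * (\<Sum>l<L. x i l * (PB l j - (if j = l then 1 else 0)))"

definition c_sel :: "nat \<Rightarrow> nat \<Rightarrow> real \<Rightarrow> real \<Rightarrow> (nat \<Rightarrow> nat \<Rightarrow> real) \<Rightarrow> (nat \<Rightarrow> nat \<Rightarrow> real)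
    \<Rightarrow> (nat \<Rightarrow> nat \<Rightarrow> nat \<Rightarrow> nat \<Rightarrow> real)
    \<Rightarrow> (nat \<Rightarrow> nat \<Rightarrow> real) \<Rightarrow> nat \<Rightarrow> nat \<Rightarrow> real" where
  "c_sel K L thA thB PA PB s x i j =
     c_mut K L thA thB PA PB x i j
   + x i j / 2 * (\<Sum>k<K. \<Sum>l<L. (s i j k l * x k l
        - (\<Sum>m<K. \<Sum>n<L. s k l m n * x k l * x m n)))"

end

theory Submission
  imports Defs
begin

lemma key:
  fixes x :: "nat \<Rightarrow> nat \<Rightarrow> real" and s :: "nat \<Rightarrow> nat \<Rightarrow> nat \<Rightarrow> nat \<Rightarrow> real"
  assumes sim: "in_simplex K L x"
    and pos: "\<forall>i<K. \<forall>j<L. 0 < x i j"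
    and sc: "\<forall>i<K. \<forall>j<L. \<forall>k<K. \<forall>l<L. s i j k l = sA i k + sB j l"
  shows "(\<Sum>i<K. \<Sum>j<L. margA L x i * margB K x j / x i j * c_sel K L thA thB PA PB s x i j)
       = (\<Sum>i<K. \<Sum>j<L. margA L x i * margB K x j / x i j * c_mut K L thA thB PA PB x i j)"
proof -
  define p where "p i = margA L x i" for i
  define q where "q j = margB K x j" for j
  define a where "a k = (\<Sum>m<K. sA k m * p m)" for k
  define b where "b l = (\<Sum>n<L. sB l n * q n)" for l
  define F where "F i j = (\<Sum>k<K. \<Sum>l<L. s i j k l * x k l)" for i j
  define W where "W = (\<Sum>k<K. \<Sum>l<L. \<Sum>m<K. \<Sum>n<L. s k l m n * x k l * x m n)"
  have sp: "(\<Sum>i<K. p i) = 1" using sim by (simp add: in_simplex_def p_def margA_def)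
  have sq: "(\<Sum>j<L. q j) = 1" using sim
    by (simp add: in_simplex_def q_def margB_def sum.swap[of _ "{..<L}"])
  have F: "F i j = a i + b j" if "i < K" "j < L" for i j
  proof -
    have "F i j = (\<Sum>k<K. \<Sum>l<L. sA i k * x k l + sB j l * x k l)"
      unfolding F_def using sc that by (intro sum.cong refl) (simp add: algebra_simps)
    also have "\<dots> = (\<Sum>k<K. sA i k * p k) + (\<Sum>l<L. sB j l * q l)"
      by (simp add: sum.distrib sum_distrib_left p_def q_def margA_def margB_def
          sum.swap[of _ "{..<L}"])
    finally show ?thesis by (simp add: a_def b_def)
  qed
  have W1: "W = (\<Sum>k<K. \<Sum>l<L. x k l * F k l)"
    unfolding W_def F_def by (simp add: sum_distrib_left mult.commute mult.left_commute)
  have W2: "W = (\<Sum>k<K. p k * a k) + (\<Sum>l<L. q l * b l)"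
  proof -
    have "W = (\<Sum>k<K. \<Sum>l<L. x k l * a k + x k l * b l)"
      unfolding W1 by (intro sum.cong refl) (simp add: F algebra_simps)
    also have "\<dots> = (\<Sum>k<K. p k * a k) + (\<Sum>l<L. q l * b l)"
      by (simp add: sum.distrib sum_distrib_right p_def q_def margA_def margB_def
          sum.swap[of _ "{..<L}"])
    finally show ?thesis .
  qed
  have E: "(\<Sum>k<K. \<Sum>l<L. (s i j k l * x k l - (\<Sum>m<K. \<Sum>n<L. s k l m n * x k l * x m n)))
      = F i j - W" for i j
    by (simp add: F_def W_def sum_subtractf)
  have zero: "(\<Sum>i<K. \<Sum>j<L. p i * q j * (F i j - W)) = 0"
  proof -
    have "(\<Sum>i<K. \<Sum>j<L. p i * q j * (F i j - W))
        = (\<Sum>i<K. \<Sum>j<L. p i * a i * q j + q j * b j * p i - p i * q j * W)"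
      by (intro sum.cong refl) (simp add: F algebra_simps)
    also have "\<dots> = (\<Sum>i<K. p i * a i) * (\<Sum>j<L. q j) + (\<Sum>j<L. q j * b j) * (\<Sum>i<K. p i)
        - (\<Sum>i<K. p i) * (\<Sum>j<L. q j) * W"
      by (simp add: sum.distrib sum_subtractf sum_distrib_left sum_distrib_right
          sum.swap[of _ "{..<L}"] mult.assoc)
    also have "\<dots> = 0" using sp sq W2 by simp
    finally show ?thesis .
  qed
  have "(\<Sum>i<K. \<Sum>j<L. margA L x i * margB K x j / x i j * c_sel K L thA thB PA PB s x i j)
     = (\<Sum>i<K. \<Sum>j<L. margA L x i * margB K x j / x i j * c_mut K L thA thB PA PB x i j
          + p i * q j * (F i j - W) / 2)"
  proof (intro sum.cong refl)
    fix i j assume "i \<in> {..<K}" "j \<in> {..<L}"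
    then have "x i j \<noteq> 0" using pos by (metis lessThan_iff less_irrefl)
    then show "margA L x i * margB K x j / x i j * c_sel K L thA thB PA PB s x i j
       = margA L x i * margB K x j / x i j * c_mut K L thA thB PA PB x i j
          + p i * q j * (F i j - W) / 2"
      unfolding c_sel_def E by (simp add: p_def q_def field_simps)
  qed
  also have "\<dots> = (\<Sum>i<K. \<Sum>j<L. margA L x i * margB K x j / x i j * c_mut K L thA thB PA PB x i j)
      + (\<Sum>i<K. \<Sum>j<L. p i * q j * (F i j - W)) / 2"
    by (simp add: sum.distrib sum_divide_distrib)
  finally show ?thesis using zero by simp
qed

theorem mainTheorem7:
  fixes K L :: nat and T thA thB J :: real
    and X :: "real \<Rightarrow> nat \<Rightarrow> nat \<Rightarrow> real"
    and PA PB :: "nat \<Rightarrow> nat \<Rightarrow> real"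
    and s :: "nat \<Rightarrow> nat \<Rightarrow> nat \<Rightarrow> nat \<Rightarrow> real"
    and sA sB :: "nat \<Rightarrow> nat \<Rightarrow> real"
  assumes "0 < T"
    and "\<forall>t\<in>{0..T}. in_simplex K L (X t)"
    and "\<forall>t\<in>{0..T}. \<forall>i<K. \<forall>j<L. 0 < X t i j"
    and "stochastic_matrix K PA" and "stochastic_matrix L PB"
    and "(\<lambda>t. \<Sum>i<K. \<Sum>j<L. (X t i j - margA L (X t) i * margB K (X t) j)\<^sup>2 / X t i j)
           integrable_on {0..T}"
    and "0 < I_T K L T X"
    and "\<forall>i<K. \<forall>j<L. \<forall>k<K. \<forall>l<L. s i j k l = sA i k + sB j l"
  shows "rho_hat K L T X J (c_sel K L thA thB PA PB s) = rho_hat K L T X J (c_mut K L thA thB PA PB)"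
proof -
  have "integral {0..T} (\<lambda>t. \<Sum>i<K. \<Sum>j<L.
      margA L (X t) i * margB K (X t) j / X t i j * c_sel K L thA thB PA PB s (X t) i j)
      = integral {0..T} (\<lambda>t. \<Sum>i<K. \<Sum>j<L.
      margA L (X t) i * margB K (X t) j / X t i j * c_mut K L thA thB PA PB (X t) i j)"
    by (rule integral_cong) (rule key, use assms in auto)
  then show ?thesis unfolding rho_hat_def by simp
qed

end
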